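(* Let $S=[S_1,\ldots,S_m]$ and $R=[R_1,\ldots,R_m]$ be two sequences of propositional formulae of the same length over the alphabet $X$. The lexicographic orders $S$ and $R$ are equivalent if and only if the formula $DIFF(S,R)$ is unsatisfiable.
   Context: Models are truth assignments. For a formula $F$: $I \leq_F J$ iff $I \models F$ or $J \not\models F$. For a sequence $S=[S_1,\ldots,S_m]$: $I \leq_S J$ iff either $S=[]$, or ($I \leq_{S_1} J$ and (either $J \not\leq_{S_1} I$ or $I \leq_{S'} J$)), where $S'=[S_2,\ldots,S_m]$. Two sequences are equivalent if their orders coincide on all pairs of models over $X$. Let $X=\{x_1,\ldots,x_n\}$ and let $Y=\{y_1,\ldots,y_n\}$, $Z=\{z_1,\ldots,z_n\}$ be disjoint sets of fresh variables; $F[Y/X]$ denotes $F$ with each $x_i$ replaced by $y_i$, and $F[Z/X]$ likewise with $z_i$. Define $STRICT(G) = G[Y/X] \wedge \neg G[Z/X]$ and $EQUIV(G) = (G[Y/X] \equiv G[Z/X])$. For fresh variables $m_1,\ldots,m_m,e_1,\ldots,e_m$, define $ORDER(M,E)$ as $O_1$ where $O_{m+1}=\top$ and $O_k = m_k \vee (e_k \wedge O_{k+1})$, i.e. $ORDER(M,E)= m_1 \vee (e_1 \wedge (m_2 \vee (e_2 \wedge \cdots)))$; similarly $ORDER(N,F)$ with fresh variables $n_1,\ldots,n_m,f_1,\ldots,f_m$. With further fresh variables $a,b$, $DIFF(S,R)$ is the conjunction of: $m_i \equiv STRICT(S_i)$ and $e_i \equiv EQUIV(S_i)$ for $i=1,\ldots,m$;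 $a \equiv ORDER(M,E)$; $n_i \equiv STRICT(R_i)$ and $f_i \equiv EQUIV(R_i)$ for $i=1,\ldots,m$; $b\equiv ORDER(N,F)$; and $a \not\equiv b$. *)

theory Defs
  imports Main
begin

datatype 'v form =
    Atom 'v
  | Top
  | Bot
  | Neg "'v form"
  | Conj "'v form" "'v form"
  | Disj "'v form" "'v form"
  | Iff "'v form" "'v form"

fun holds :: "('v \<Rightarrow> bool) \<Rightarrow> 'v form \<Rightarrow> bool" where
  "holds I (Atom v) = I v"
| "holds I Top = True"
| "holds I Bot = False"
| "holds I (Neg F) = (\<not> holds I F)"
| "holds I (Conj F G) = (holds I F \<and> holds I G)"
| "holds I (Disj F G) = (holds I F \<or> holds I G)"
| "holds I (Iff F G) = (holds I F = holds I G)"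

definition satisfiable :: "'v form \<Rightarrow> bool" where
  "satisfiable F = (\<exists>I. holds I F)"

definition le_form :: "'x form \<Rightarrow> ('x \<Rightarrow> bool) \<Rightarrow> ('x \<Rightarrow> bool) \<Rightarrow> bool" where
  "le_form F I J = (holds I F \<or> \<not> holds J F)"

fun le_seq :: "'x form list \<Rightarrow> ('x \<Rightarrow> bool) \<Rightarrow> ('x \<Rightarrow> bool) \<Rightarrow> bool" where
  "le_seq [] I J = True"
| "le_seq (F # S') I J = (le_form F I J \<and> (\<not> le_form F J I \<or> le_seq S' I J))"

definition seq_equiv :: "'x form list \<Rightarrow> 'x form list \<Rightarrow> bool" where
  "seq_equiv S R = (\<forall>I J. le_seq S I J = le_seq R I J)"

text \<open>Variables of the DIFF formula: copies y_i, z_i of the original variables,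
  and fresh variables m_k, e_k, n_k, f_k (k = 1..m), a, b.\<close>
datatype 'x dvar = Yv 'x | Zv 'x | Mv nat | Ev nat | Nv nat | Fv nat | Av | Bv

definition STRICT :: "'x form \<Rightarrow> 'x dvar form" where
  "STRICT G = Conj (map_form Yv G) (Neg (map_form Zv G))"

definition EQUIV :: "'x form \<Rightarrow> 'x dvar form" where
  "EQUIV G = Iff (map_form Yv G) (map_form Zv G)"

definition ORDER :: "(nat \<Rightarrow> 'v) \<Rightarrow> (nat \<Rightarrow> 'v) \<Rightarrow> nat \<Rightarrow> 'v form" where
  "ORDER mv ev m = foldr (\<lambda>k acc. Disj (Atom (mv k)) (Conj (Atom (ev k)) acc)) [1..<m+1] Top"

definition big_conj :: "'v form list \<Rightarrow> 'v form" where
  "big_conj Fs = foldr Conj Fs Top"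

definition DIFF :: "'x form list \<Rightarrow> 'x form list \<Rightarrow> 'x dvar form" where
  "DIFF S R = (let m = length S in big_conj (
       [Iff (Atom (Mv i)) (STRICT Si). (i, Si) \<leftarrow> zip [1..<m+1] S]
     @ [Iff (Atom (Ev i)) (EQUIV Si). (i, Si) \<leftarrow> zip [1..<m+1] S]
     @ [Iff (Atom Av) (ORDER Mv Ev m)]
     @ [Iff (Atom (Nv i)) (STRICT Ri). (i, Ri) \<leftarrow> zip [1..<m+1] R]
     @ [Iff (Atom (Fv i)) (EQUIV Ri). (i, Ri) \<leftarrow> zip [1..<m+1] R]
     @ [Iff (Atom Bv) (ORDER Nv Fv m)]
     @ [Neg (Iff (Atom Av) (Atom Bv))]))"

end

theory Submission
  imports Defs
begin

declare upt_Suc[simp del]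

lemma holds_map: "holds v (map_form f G) = holds (v \<circ> f) G"
  by (induction G) auto

lemma holds_big_conj: "holds v (big_conj Fs) = (\<forall>F\<in>set Fs. holds v F)"
  unfolding big_conj_def by (induction Fs) auto

definition strictv :: "'x form \<Rightarrow> ('x \<Rightarrow> bool) \<Rightarrow> ('x \<Rightarrow> bool) \<Rightarrow> bool" where
  "strictv G I J = (holds I G \<and> \<not> holds J G)"
definition eqv :: "'x form \<Rightarrow> ('x \<Rightarrow> bool) \<Rightarrow> ('x \<Rightarrow> bool) \<Rightarrow> bool" where
  "eqv G I J = (holds I G = holds J G)"

lemma order_gen:
  assumes "\<And>i. i < length S \<Longrightarrow> v (mv (k + i + 1)) = strictv (S ! i) I J"
      and "\<And>i. i < length S \<Longrightarrow> v (ev (k + i + 1)) = eqv (S ! i) I J"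
  shows "holds v (foldr (\<lambda>k acc. Disj (Atom (mv k)) (Conj (Atom (ev k)) acc)) [k+1..<k+1+length S] Top)
         = le_seq S I J"
  using assms
proof (induction S arbitrary: k)
  case Nil
  then show ?case by simp
next
  case (Cons F S)
  have up: "[k+1..<k+1+length (F#S)] = (k+1) # [Suc k+1..<Suc k+1+length S]"
    by (simp add: upt_rec)
  have IH: "holds v (foldr (\<lambda>k acc. Disj (Atom (mv k)) (Conj (Atom (ev k)) acc)) [Suc k+1..<Suc k+1+length S] Top) = le_seq S I J"
    apply (rule Cons.IH)
    using Cons.prems(1)[of "Suc _"] Cons.prems(2)[of "Suc _"] by auto
  have m: "v (mv (k+1)) = strictv F I J" using Cons.prems(1)[of 0] by simp
  have e: "v (ev (k+1)) = eqv F I J" using Cons.prems(2)[of 0] by simp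
  show ?case unfolding up using IH m e
    by (auto simp: strictv_def eqv_def le_form_def)
qed

lemma order_holds:
  assumes "\<And>i. i < length S \<Longrightarrow> v (mv (i + 1)) = strictv (S ! i) I J"
      and "\<And>i. i < length S \<Longrightarrow> v (ev (i + 1)) = eqv (S ! i) I J"
  shows "holds v (ORDER mv ev (length S)) = le_seq S I J"
  unfolding ORDER_def using order_gen[of S v mv 0 I J ev] assms by simp

lemma mem_zip: "(i, G) \<in> set (zip [1..<m+1] S) \<Longrightarrow> length S = m \<Longrightarrow> \<exists>j<m. i = j+1 \<and> G = S ! j"
  by (auto simp: set_zip)

lemma zip_mem: "j < length S \<Longrightarrow> (j+1, S ! j) \<in> set (zip [1..<length S+1] S)"
  by (auto simp: set_zip intro!: exI[of _ j])

lemma diff_sat_iff: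
  assumes "length S = length R"
  shows "satisfiable (DIFF S R) \<longleftrightarrow> (\<exists>I J. le_seq S I J \<noteq> le_seq R I J)"
proof
  assume "satisfiable (DIFF S R)"
  then obtain v where v: "holds v (DIFF S R)" unfolding satisfiable_def by blast
  define I where "I = v \<circ> Yv"
  define J where "J = v \<circ> Zv"
  let ?m = "length S"
  have all: "\<forall>F\<in>set ([Iff (Atom (Mv i)) (STRICT Si). (i, Si) \<leftarrow> zip [1..<?m+1] S]
     @ [Iff (Atom (Ev i)) (EQUIV Si). (i, Si) \<leftarrow> zip [1..<?m+1] S]
     @ [Iff (Atom Av) (ORDER Mv Ev ?m)]
     @ [Iff (Atom (Nv i)) (STRICT Ri). (i, Ri) \<leftarrow> zip [1..<?m+1] R]
     @ [Iff (Atom (Fv i)) (EQUIV Ri). (i, Ri) \<leftarrow> zip [1..<?m+1] R]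
     @ [Iff (Atom Bv) (ORDER Nv Fv ?m)]
     @ [Neg (Iff (Atom Av) (Atom Bv))]). holds v F"
    using v by (simp only: DIFF_def Let_def holds_big_conj)
  have a: "v Av = le_seq S I J"
  proof -
    have "v Av = holds v (ORDER Mv Ev ?m)" using all by auto
    also have "\<dots> = le_seq S I J"
    proof (rule order_holds)
      fix i assume i: "i < length S"
      have "holds v (Iff (Atom (Mv (i+1))) (STRICT (S!i)))"
        using all zip_mem[OF i] by fastforce
      then show "v (Mv (i + 1)) = strictv (S ! i) I J"
        by (simp add: STRICT_def strictv_def holds_map I_def J_def)
      have "holds v (Iff (Atom (Ev (i+1))) (EQUIV (S!i)))"
        using all zip_mem[OF i] by fastforce
      then show "v (Ev (i + 1)) = eqv (S ! i) I J"
        by (simp add: EQUIV_def eqv_def holds_map I_def J_def)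
    qed
    finally show ?thesis .
  qed
  have b: "v Bv = le_seq R I J"
  proof -
    have "v Bv = holds v (ORDER Nv Fv (length R))" using all assms by auto
    also have "\<dots> = le_seq R I J"
    proof (rule order_holds)
      fix i assume i: "i < length R"
      have "holds v (Iff (Atom (Nv (i+1))) (STRICT (R!i)))"
        using all zip_mem[OF i] assms by fastforce
      then show "v (Nv (i + 1)) = strictv (R ! i) I J"
        by (simp add: STRICT_def strictv_def holds_map I_def J_def)
      have "holds v (Iff (Atom (Fv (i+1))) (EQUIV (R!i)))"
        using all zip_mem[OF i] assms by fastforce
      then show "v (Fv (i + 1)) = eqv (R ! i) I J"
        by (simp add: EQUIV_def eqv_def holds_map I_def J_def)
    qed
    finally show ?thesis .
  qed
  have "v Av \<noteq> v Bv" using all by auto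
  then show "\<exists>I J. le_seq S I J \<noteq> le_seq R I J" using a b by blast
next
  assume "\<exists>I J. le_seq S I J \<noteq> le_seq R I J"
  then obtain I J where d: "le_seq S I J \<noteq> le_seq R I J" by blast
  define v where "v = (\<lambda>w. case w of Yv x \<Rightarrow> I x | Zv x \<Rightarrow> J x
     | Mv i \<Rightarrow> strictv (S ! (i - 1)) I J | Ev i \<Rightarrow> eqv (S ! (i - 1)) I J
     | Nv i \<Rightarrow> strictv (R ! (i - 1)) I J | Fv i \<Rightarrow> eqv (R ! (i - 1)) I J
     | Av \<Rightarrow> le_seq S I J | Bv \<Rightarrow> le_seq R I J)"
  have vY: "v \<circ> Yv = I" and vZ: "v \<circ> Zv = J" by (auto simp: v_def)
  have oS: "holds v (ORDER Mv Ev (length S)) = le_seq S I J"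
    by (rule order_holds) (auto simp: v_def)
  have oR: "holds v (ORDER Nv Fv (length R)) = le_seq R I J"
    by (rule order_holds) (auto simp: v_def)
  have "holds v (DIFF S R)"
    unfolding DIFF_def Let_def holds_big_conj
    using oS oR d assms
    by (auto simp: set_zip STRICT_def EQUIV_def holds_map vY vZ, auto simp: v_def strictv_def eqv_def)
  then show "satisfiable (DIFF S R)" unfolding satisfiable_def by blast
qed

theorem theorem9:
  fixes S R :: "('x::finite) form list"
  assumes "length S = length R"
  shows "seq_equiv S R \<longleftrightarrow> \<not> satisfiable (DIFF S R)"
  using diff_sat_iff[OF assms] unfolding seq_equiv_def by blast

end
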